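(* No graph of the form $G_4\star G_4'$ (with $G_4,G_4'$ any graphs on $4$ vertices) is $3$-ball packable, except $C_4\star C_4$.
   Context: $C_4$ is the $4$-cycle, $\star$ the graph join. A $3$-ball in $\hat{\mathbb R}^3$ is a closed ball, closed exterior of an open ball with $\infty$, or a closed half-space with $\infty$; a $3$-ball packing is a collection of $3$-balls with disjoint interiors; its tangency graph joins balls meeting in exactly one point; a graph is $3$-ball packable if isomorphic to the tangency graph of some $3$-ball packing. *)

theory Defs
  imports "HOL-Analysis.Analysis"
begin

(* Points of the extended space R^3 \<union> {\<infinity>}: None is the point at infinity. *)
type_synonym xpt = "(real^3) option"

(* 3-balls: closed ball (centre, radius), closed exterior of an open ball together
   with \<infinity> (centre, radius), closed half-space {x. a\<bullet>x \<le> c} together with \<infinity>. *)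
datatype ball3 = CBall "real^3" real | Exterior "real^3" real | HalfSpace "real^3" real

fun valid_ball3 :: "ball3 \<Rightarrow> bool" where
  "valid_ball3 (CBall c r) = (r > 0)"
| "valid_ball3 (Exterior c r) = (r > 0)"
| "valid_ball3 (HalfSpace a c) = (a \<noteq> 0)"

fun ball3_set :: "ball3 \<Rightarrow> xpt set" where
  "ball3_set (CBall c r) = Some ` cball c r"
| "ball3_set (Exterior c r) = insert None (Some ` (- ball c r))"
| "ball3_set (HalfSpace a c) = insert None (Some ` {x. a \<bullet> x \<le> c})"

fun ball3_interior :: "ball3 \<Rightarrow> xpt set" where
  "ball3_interior (CBall c r) = Some ` ball c r"
| "ball3_interior (Exterior c r) = insert None (Some ` (- cball c r))"
| "ball3_interior (HalfSpace a c) = insert None (Some ` {x. a \<bullet> x < c})"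

definition tangent3 :: "ball3 \<Rightarrow> ball3 \<Rightarrow> bool" where
  "tangent3 B B' \<longleftrightarrow> (\<exists>!p. p \<in> ball3_set B \<inter> ball3_set B')"

definition simple_graph :: "'a set \<Rightarrow> ('a \<Rightarrow> 'a \<Rightarrow> bool) \<Rightarrow> bool" where
  "simple_graph V E \<longleftrightarrow> finite V \<and> (\<forall>x y. E x y \<longrightarrow> x \<in> V \<and> y \<in> V \<and> x \<noteq> y \<and> E y x)"

definition graph_iso :: "'a set \<Rightarrow> ('a \<Rightarrow> 'a \<Rightarrow> bool) \<Rightarrow> 'b set \<Rightarrow> ('b \<Rightarrow> 'b \<Rightarrow> bool) \<Rightarrow> bool" where
  "graph_iso V E W F \<longleftrightarrow> (\<exists>f. bij_betw f V W \<and> (\<forall>x\<in>V. \<forall>y\<in>V. E x y \<longleftrightarrow> F (f x) (f y)))"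

definition ball_packable3 :: "'a set \<Rightarrow> ('a \<Rightarrow> 'a \<Rightarrow> bool) \<Rightarrow> bool" where
  "ball_packable3 V E \<longleftrightarrow> (\<exists>b :: 'a \<Rightarrow> ball3.
      (\<forall>v\<in>V. valid_ball3 (b v)) \<and> inj_on b V \<and>
      (\<forall>u\<in>V. \<forall>v\<in>V. u \<noteq> v \<longrightarrow> ball3_interior (b u) \<inter> ball3_interior (b v) = {}) \<and>
      (\<forall>u\<in>V. \<forall>v\<in>V. u \<noteq> v \<longrightarrow> (E u v \<longleftrightarrow> tangent3 (b u) (b v))))"

definition join_verts :: "'a set \<Rightarrow> 'b set \<Rightarrow> ('a + 'b) set" where
  "join_verts V W = V <+> W"

fun join_edges :: "'a set \<Rightarrow> ('a \<Rightarrow> 'a \<Rightarrow> bool) \<Rightarrow> 'b set \<Rightarrow> ('b \<Rightarrow> 'b \<Rightarrow> bool)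
    \<Rightarrow> ('a + 'b) \<Rightarrow> ('a + 'b) \<Rightarrow> bool" where
  "join_edges V E W F (Inl x) (Inl y) = E x y"
| "join_edges V E W F (Inr x) (Inr y) = F x y"
| "join_edges V E W F (Inl x) (Inr y) = (x \<in> V \<and> y \<in> W)"
| "join_edges V E W F (Inr x) (Inl y) = (x \<in> W \<and> y \<in> V)"

definition C4_verts :: "nat set" where "C4_verts = {0..<4}"
definition C4_edges :: "nat \<Rightarrow> nat \<Rightarrow> bool" where
  "C4_edges i j \<longleftrightarrow> i < 4 \<and> j < 4 \<and> (j = (i + 1) mod 4 \<or> i = (j + 1) mod 4)"

end

theory Submission
  imports Defs
begin


type_synonym lv = "(real^3) \<times> real \<times> real"

definition lor :: "lv \<Rightarrow> lv \<Rightarrow> real" where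
  "lor u v = fst u \<bullet> fst v + fst (snd u) * fst (snd v) - snd (snd u) * snd (snd v)"

lemma lor_comm: "lor u v = lor v u"
  by (simp add: lor_def inner_commute mult.commute)

lemma lor_add_left: "lor (x + y) v = lor x v + lor y v"
  by (simp add: lor_def inner_add_left algebra_simps)
lemma lor_add_right: "lor v (x + y) = lor v x + lor v y"
  by (simp add: lor_def inner_add_right algebra_simps)
lemma lor_diff_left: "lor (x - y) v = lor x v - lor y v"
  by (simp add: lor_def inner_diff_left algebra_simps)
lemma lor_diff_right: "lor v (x - y) = lor v x - lor v y"
  by (simp add: lor_def inner_diff_right algebra_simps)
lemma lor_minus_left: "lor (- x) v = - lor x v"
  by (simp add: lor_def algebra_simps)
lemma lor_minus_right: "lor v (- x) = - lor v x"
  by (simp add: lor_def algebra_simps)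
lemma lor_scale_left: "lor (r *\<^sub>R x) v = r * lor x v"
  by (simp add: lor_def algebra_simps)
lemma lor_scale_right: "lor v (r *\<^sub>R x) = r * lor v x"
  by (simp add: lor_def algebra_simps)
lemma lor_zero_left[simp]: "lor 0 v = 0" by (simp add: lor_def)
lemma lor_zero_right[simp]: "lor v 0 = 0" by (simp add: lor_def)

lemma lor_sum_left: "lor (\<Sum>i\<in>I. f i) v = (\<Sum>i\<in>I. lor (f i) v)"
  by (induction I rule: infinite_finite_induct) (auto simp: lor_add_left)
lemma lor_sum_right: "lor v (\<Sum>i\<in>I. f i) = (\<Sum>i\<in>I. lor v (f i))"
  by (induction I rule: infinite_finite_induct) (auto simp: lor_add_right)

lemmas lor_simps = lor_add_left lor_add_right lor_diff_left lor_diff_right lor_minus_left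
  lor_minus_right lor_scale_left lor_scale_right lor_sum_left lor_sum_right

lemma lor_timelike_orth:
  assumes t: "lor t t < 0" and xt: "lor x t = 0"
  shows "lor x x \<ge> 0 \<and> (lor x x = 0 \<longrightarrow> x = 0)"
proof -
  obtain x1 x2 x3 where x: "x = (x1, x2, x3)" by (cases x) auto
  obtain t1 t2 t3 where tt: "t = (t1, t2, t3)" by (cases t) auto
  define X where "X = (x1, x2)"
  define T where "T = (t1, t2)"
  have lxx: "lor x x = X \<bullet> X - x3^2" using x by (simp add: lor_def X_def power2_eq_square)
  have ltt: "lor t t = T \<bullet> T - t3^2" using tt by (simp add: lor_def T_def power2_eq_square)
  have lxt: "lor x t = X \<bullet> T - x3 * t3" using x tt by (simp add: lor_def X_def T_def)
  have cs: "(X \<bullet> T)^2 \<le> (X \<bullet> X) * (T \<bullet> T)" by (rule Cauchy_Schwarz_ineq)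
  have X0: "X \<bullet> X \<ge> 0" "T \<bullet> T \<ge> 0" by auto
  have e: "X \<bullet> T = x3 * t3" using xt lxt by simp
  have tpos: "t3^2 > T \<bullet> T" using t ltt by simp
  have "x3^2 * t3^2 \<le> (X \<bullet> X) * (T \<bullet> T)" using cs e by (simp add: power_mult_distrib)
  also have "\<dots> \<le> (X \<bullet> X) * t3^2" using tpos X0 by (intro mult_left_mono) auto
  finally have k: "x3^2 * t3^2 \<le> (X \<bullet> X) * t3^2" .
  have t3p: "t3^2 > 0" using tpos X0 by linarith
  have ge: "x3^2 \<le> X \<bullet> X" using k t3p by simp
  moreover have "lor x x = 0 \<longrightarrow> x = 0"
  proof
    assume "lor x x = 0"
    then have eq: "x3^2 = X \<bullet> X" using lxx by simp
    have "(X \<bullet> X) * t3^2 \<le> (X \<bullet> X) * (T \<bullet> T)" using cs e eq by (simp add: power_mult_distrib)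
    then have "(X \<bullet> X) * (t3^2 - T \<bullet> T) \<le> 0" by (simp add: algebra_simps)
    then have "X \<bullet> X \<le> 0" using tpos by (simp add: mult_le_0_iff)
    then have "X = 0" by (metis inner_ge_zero inner_eq_zero_iff order_antisym)
    then have "x3 = 0" using eq by simp
    then show "x = 0" using \<open>X = 0\<close> x by (simp add: X_def zero_prod_def)
  qed
  ultimately show ?thesis using lxx by simp
qed

lemma reverse_cs:
  assumes "lor x x < 0"
  shows "lor x x * lor y y \<le> (lor x y)^2"
proof -
  define k where "k = lor x y / lor x x"
  define z where "z = y - k *\<^sub>R x"
  have "lor z x = 0" using assms by (simp add: z_def k_def lor_simps lor_comm)
  then have "lor z z \<ge> 0" using lor_timelike_orth[OF assms] by blast
  moreover have "lor z z = lor y y - 2 * k * lor x y + k^2 * lor x x"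
    by (simp add: z_def lor_simps lor_comm power2_eq_square algebra_simps)
  moreover have "k^2 * lor x x = k * lor x y" using assms by (simp add: k_def power2_eq_square)
  ultimately have "lor y y - k * lor x y \<ge> 0" by simp
  then have "lor x x * (lor y y - k * lor x y) \<le> 0" using assms by (simp add: mult_nonpos_nonneg)
  moreover have "lor x x * (k * lor x y) = (lor x y)^2" using assms by (simp add: k_def power2_eq_square)
  ultimately show ?thesis by (simp add: algebra_simps)
qed

lemma dep:
  fixes f :: "'i \<Rightarrow> 'v::euclidean_space"
  assumes "finite I" "card I > DIM('v)"
  shows "\<exists>u. (\<exists>i\<in>I. u i \<noteq> 0) \<and> (\<Sum>i\<in>I. u i *\<^sub>R f i) = 0"
proof (cases "inj_on f I")
  case True
  have "card (f ` I) > DIM('v)" using True assms by (simp add: card_image)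
  then have "dependent (f ` I)" using dependent_biggerset by blast
  then obtain u' where u': "\<exists>v\<in>f ` I. u' v \<noteq> 0" "(\<Sum>v\<in>f ` I. u' v *\<^sub>R v) = 0"
    using dependent_finite[of "f ` I"] assms by auto
  have "(\<Sum>i\<in>I. u' (f i) *\<^sub>R f i) = (\<Sum>v\<in>f ` I. u' v *\<^sub>R v)"
    using True by (simp add: sum.reindex)
  then show ?thesis using u' by (intro exI[of _ "u' \<circ> f"]) auto
next
  case False
  then obtain i k where ik: "i \<in> I" "k \<in> I" "i \<noteq> k" "f i = f k" unfolding inj_on_def by blast
  define u where "u = (\<lambda>t. (if t = i then 1 else 0) - (if t = k then 1 else (0::real)))"
  have "(\<Sum>t\<in>I. u t *\<^sub>R f t) = (\<Sum>t\<in>I. (if t = i then f t else 0)) - (\<Sum>t\<in>I. (if t = k then f t else 0))"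
    unfolding sum_subtractf[symmetric] by (rule sum.cong) (auto simp: u_def)
  also have "\<dots> = 0" using ik assms by simp
  finally show ?thesis using ik by (intro exI[of _ u]) (auto simp: u_def)
qed



definition rel :: "'a set \<Rightarrow> ('a \<Rightarrow> lv) \<Rightarrow> ('a \<Rightarrow> real) \<Rightarrow> bool" where
  "rel V a c \<longleftrightarrow> (\<Sum>i\<in>V. c i) = 0 \<and> (\<Sum>i\<in>V. c i *\<^sub>R a i) = 0 \<and> (\<exists>i\<in>V. c i \<noteq> 0)"

definition side :: "'a set \<Rightarrow> ('a \<Rightarrow> lv) \<Rightarrow> bool" where
  "side V a \<longleftrightarrow> finite V \<and> card V = 4 \<and> (\<forall>i\<in>V. lor (a i) (a i) = 1)
     \<and> (\<forall>i\<in>V. \<forall>k\<in>V. i \<noteq> k \<longrightarrow> lor (a i) (a k) \<le> -1)"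

lemma rel_F1:
  assumes "rel V a c" "k \<in> V"
  shows "(\<Sum>i\<in>V. c i * lor (a k) (a i)) = 0"
proof -
  have "lor (a k) (\<Sum>i\<in>V. c i *\<^sub>R a i) = 0" using assms by (simp add: rel_def)
  then show ?thesis by (simp add: lor_simps)
qed

lemma rel_neg: "rel V a c \<Longrightarrow> rel V a (\<lambda>i. - c i)"
  by (simp add: rel_def sum_negf)

lemma rel_pos_exists:
  assumes "rel V a c" "finite V"
  shows "\<exists>k\<in>V. c k > 0"
proof (rule ccontr)
  assume "\<not> ?thesis"
  then have le: "\<forall>i\<in>V. c i \<le> 0" by auto
  obtain i where "i \<in> V" "c i \<noteq> 0" using assms by (auto simp: rel_def)
  then have "\<exists>i\<in>V. c i < 0" using le by force
  then have "(\<Sum>i\<in>V. c i) < (\<Sum>i\<in>V. 0)" using le assms(2) by (intro sum_strict_mono_ex1) auto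
  then show False using assms by (simp add: rel_def)
qed

lemma rel_two_pos:
  assumes s: "side V a" and r: "rel V a c" and k: "k \<in> V" "c k > 0"
  shows "\<exists>k'\<in>V. k' \<noteq> k \<and> c k' > 0"
proof (rule ccontr)
  assume "\<not> ?thesis"
  then have le: "\<forall>i\<in>V - {k}. c i \<le> 0" by auto
  have fin: "finite V" using s by (simp add: side_def)
  have "0 = (\<Sum>i\<in>V. c i * lor (a k) (a i))" using rel_F1[OF r k(1)] by simp
  also have "\<dots> = c k * lor (a k) (a k) + (\<Sum>i\<in>V - {k}. c i * lor (a k) (a i))"
    using fin k by (simp add: sum.remove)
  also have "\<dots> \<ge> c k + (\<Sum>i\<in>V - {k}. - c i)"
  proof -
    have "(\<Sum>i\<in>V - {k}. - c i) \<le> (\<Sum>i\<in>V - {k}. c i * lor (a k) (a i))"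
    proof (rule sum_mono)
      fix i assume i: "i \<in> V - {k}"
      then have "lor (a k) (a i) \<le> -1" using s k by (auto simp: side_def)
      moreover have "c i \<le> 0" using le i by auto
      ultimately have "c i * (lor (a k) (a i) + 1) \<ge> 0" by (simp add: mult_nonpos_nonpos)
      then show "- c i \<le> c i * lor (a k) (a i)" by (simp add: algebra_simps)
    qed
    then show ?thesis using s k by (simp add: side_def)
  qed
  finally have A: "c k + (\<Sum>i\<in>V - {k}. - c i) \<le> 0" .
  have "(\<Sum>i\<in>V. c i) = c k + (\<Sum>i\<in>V - {k}. c i)" using fin k by (simp add: sum.remove)
  then have "(\<Sum>i\<in>V - {k}. c i) = - c k" using r by (simp add: rel_def)
  then show False using A k by (simp add: sum_negf)
qed

lemma rel_card:
  assumes s: "side V a" and r: "rel V a c"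
  shows "card {i\<in>V. c i > 0} \<ge> 2" "card {i\<in>V. c i < 0} \<ge> 2"
proof -
  have fin: "finite V" using s by (simp add: side_def)
  have gen: "card {i\<in>V. d i > 0} \<ge> 2" if rd: "rel V a d" for d
  proof -
    obtain k where k: "k \<in> V" "d k > 0" using rel_pos_exists[OF rd fin] by blast
    obtain k' where k': "k' \<in> V" "k' \<noteq> k" "d k' > 0" using rel_two_pos[OF s rd k] by blast
    have "{k, k'} \<subseteq> {i\<in>V. d i > 0}" using k k' by auto
    then have "card {k, k'} \<le> card {i\<in>V. d i > 0}" using fin by (intro card_mono) auto
    then show ?thesis using k' by simp
  qed
  show "card {i\<in>V. c i > 0} \<ge> 2" using gen[OF r] .
  show "card {i\<in>V. c i < 0} \<ge> 2" using gen[OF rel_neg[OF r]] by simp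
qed

lemma rel_nonzero:
  assumes s: "side V a" and r: "rel V a c" and i: "i \<in> V"
  shows "c i \<noteq> 0"
proof
  assume ci: "c i = 0"
  have fin: "finite V" and c4: "card V = 4" using s by (auto simp: side_def)
  let ?P = "{i\<in>V. c i > 0}" and ?N = "{i\<in>V. c i < 0}"
  have "?P \<union> ?N \<subseteq> V - {i}" using ci by auto
  then have "card (?P \<union> ?N) \<le> card (V - {i})" using fin by (intro card_mono) auto
  also have "\<dots> = 3" using fin c4 i by simp
  finally have "card (?P \<union> ?N) \<le> 3" .
  moreover have "card (?P \<union> ?N) = card ?P + card ?N" using fin by (intro card_Un_disjoint) auto
  ultimately show False using rel_card[OF s r] by simp
qed

lemma kbound:
  assumes s: "side V a" and r: "rel V a c" and k: "k \<in> V" "c k > 0"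
  shows "(\<Sum>i\<in>V. \<bar>c i\<bar> * lor (a k) (a i)) \<le> - (\<Sum>i\<in>V. \<bar>c i\<bar>)"
    "(\<exists>n\<in>V. c n < 0 \<and> lor (a k) (a n) < -1) \<Longrightarrow>
       (\<Sum>i\<in>V. \<bar>c i\<bar> * lor (a k) (a i)) < - (\<Sum>i\<in>V. \<bar>c i\<bar>)"
proof -
  have fin: "finite V" using s by (simp add: side_def)
  define h where "h i = (if c i < 0 then 2 * c i else 0)" for i
  have e1: "(\<Sum>i\<in>V. \<bar>c i\<bar> * lor (a k) (a i)) = (\<Sum>i\<in>V. (\<bar>c i\<bar> - c i) * lor (a k) (a i))"
    using rel_F1[OF r k(1)] by (simp add: left_diff_distrib sum_subtractf)
  have e2: "(\<Sum>i\<in>V. h i) = - (\<Sum>i\<in>V. \<bar>c i\<bar>)"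
  proof -
    have "(\<Sum>i\<in>V. \<bar>c i\<bar>) = (\<Sum>i\<in>V. c i - h i)" by (rule sum.cong) (auto simp: h_def)
    also have "\<dots> = - (\<Sum>i\<in>V. h i)" using r by (simp add: sum_subtractf rel_def)
    finally show ?thesis by simp
  qed
  have pw: "(\<bar>c i\<bar> - c i) * lor (a k) (a i) \<le> h i" if i: "i \<in> V" for i
  proof (cases "c i < 0")
    case True
    then have "i \<noteq> k" using k by auto
    then have "lor (a k) (a i) \<le> -1" using s k i by (auto simp: side_def)
    then have "(- 2 * c i) * (lor (a k) (a i) + 1) \<le> 0" using True
      by (intro mult_nonneg_nonpos) auto
    then have "(- 2 * c i) * lor (a k) (a i) + (- 2 * c i) \<le> 0" by (simp only: distrib_left mult_1_right)
    moreover have e: "\<bar>c i\<bar> - c i = - 2 * c i" using True by simp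
    moreover have hh: "h i = 2 * c i" using True by (simp add: h_def)
    ultimately show ?thesis unfolding e hh by linarith
  next
    case False then show ?thesis by (simp add: h_def)
  qed
  have "(\<Sum>i\<in>V. (\<bar>c i\<bar> - c i) * lor (a k) (a i)) \<le> (\<Sum>i\<in>V. h i)"
    using pw by (intro sum_mono) auto
  then show "(\<Sum>i\<in>V. \<bar>c i\<bar> * lor (a k) (a i)) \<le> - (\<Sum>i\<in>V. \<bar>c i\<bar>)" using e1 e2 by simp
  assume "\<exists>n\<in>V. c n < 0 \<and> lor (a k) (a n) < -1"
  then obtain n where n: "n \<in> V" "c n < 0" "lor (a k) (a n) < -1" by blast
  have "(- 2 * c n) * (lor (a k) (a n) + 1) < 0" using n
    by (intro mult_pos_neg) auto
  then have "(- 2 * c n) * lor (a k) (a n) + (- 2 * c n) < 0" by (simp only: distrib_left mult_1_right)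
  moreover have e: "\<bar>c n\<bar> - c n = - 2 * c n" using n by simp
  moreover have hh: "h n = 2 * c n" using n by (simp add: h_def)
  ultimately have hn: "(\<bar>c n\<bar> - c n) * lor (a k) (a n) < h n" unfolding e hh by linarith
  have "(\<Sum>i\<in>V. (\<bar>c i\<bar> - c i) * lor (a k) (a i)) < (\<Sum>i\<in>V. h i)"
    apply (rule sum_strict_mono_ex1[OF fin])
    using pw apply blast
    using n hn by blast
  then show "(\<Sum>i\<in>V. \<bar>c i\<bar> * lor (a k) (a i)) < - (\<Sum>i\<in>V. \<bar>c i\<bar>)" using e1 e2 by simp
qed



lemma rel_alpha:
  assumes s: "side V a" and r: "rel V a c"
  shows "\<exists>l. (\<Sum>i\<in>V. l i) = 1 \<and> lor (\<Sum>i\<in>V. l i *\<^sub>R a i) (\<Sum>i\<in>V. l i *\<^sub>R a i) \<le> -1 \<and>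
     (lor (\<Sum>i\<in>V. l i *\<^sub>R a i) (\<Sum>i\<in>V. l i *\<^sub>R a i) = -1 \<longrightarrow>
        (\<forall>p\<in>V. \<forall>n\<in>V. c p > 0 \<longrightarrow> c n < 0 \<longrightarrow> lor (a p) (a n) = -1))"
proof -
  have fin: "finite V" using s by (simp add: side_def)
  define S where "S = (\<Sum>i\<in>V. \<bar>c i\<bar>)"
  define R where "R k = (\<Sum>i\<in>V. \<bar>c i\<bar> * lor (a k) (a i))" for k
  define Q where "Q = (\<Sum>k\<in>V. \<bar>c k\<bar> * R k)"
  obtain i0 where i0: "i0 \<in> V" "c i0 \<noteq> 0" using r by (auto simp: rel_def)
  have Spos: "S > 0" unfolding S_def
    using fin i0 by (intro sum_pos2[of _ i0]) auto
  have Rb: "R k \<le> - S" if "k \<in> V" "c k \<noteq> 0" for k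
  proof (cases "c k > 0")
    case True then show ?thesis using kbound(1)[OF s r that(1)] by (simp add: R_def S_def)
  next
    case False
    then have "- c k > 0" using that by simp
    then show ?thesis using kbound(1)[OF s rel_neg[OF r] that(1)] by (simp add: R_def S_def)
  qed
  have pw: "\<bar>c k\<bar> * R k \<le> \<bar>c k\<bar> * (- S)" if "k \<in> V" for k
  proof (cases "c k = 0")
    case False
    then have "R k \<le> - S" using Rb[OF that] by blast
    then show ?thesis by (intro mult_left_mono) auto
  qed simp
  have Qle: "Q \<le> - S * S"
  proof -
    have "Q \<le> (\<Sum>k\<in>V. \<bar>c k\<bar> * (- S))" unfolding Q_def using pw by (intro sum_mono) auto
    also have "\<dots> = - S * S" by (simp add: S_def sum_negf sum_distrib_right[symmetric])
    finally show ?thesis .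
  qed
  have Qlt: "Q < - S * S" if ex: "\<exists>p\<in>V. \<exists>n\<in>V. c p > 0 \<and> c n < 0 \<and> lor (a p) (a n) \<noteq> -1"
  proof -
    obtain p n where pn: "p \<in> V" "n \<in> V" "c p > 0" "c n < 0" "lor (a p) (a n) \<noteq> -1" using ex by blast
    have "p \<noteq> n" using pn by auto
    then have "lor (a p) (a n) < -1" using s pn by (force simp: side_def)
    then have "R p < - S" using kbound(2)[OF s r pn(1,3)] pn by (auto simp: R_def S_def)
    then have lt: "\<bar>c p\<bar> * R p < \<bar>c p\<bar> * (- S)" using pn by (intro mult_strict_left_mono) auto
    have "Q < (\<Sum>k\<in>V. \<bar>c k\<bar> * (- S))" unfolding Q_def
      apply (rule sum_strict_mono_ex1[OF fin])
      using pw apply blast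
      using pn lt by blast
    also have "\<dots> = - S * S" by (simp add: S_def sum_negf sum_distrib_right[symmetric])
    finally show ?thesis .
  qed
  define l where "l i = \<bar>c i\<bar> / S" for i
  have suml: "(\<Sum>i\<in>V. l i) = 1" using Spos by (simp add: l_def S_def sum_divide_distrib[symmetric])
  have al: "(\<Sum>i\<in>V. l i *\<^sub>R a i) = (1 / S) *\<^sub>R (\<Sum>i\<in>V. \<bar>c i\<bar> *\<^sub>R a i)"
    by (simp add: l_def scaleR_sum_right divide_inverse_commute)
  have LQ: "lor (\<Sum>i\<in>V. \<bar>c i\<bar> *\<^sub>R a i) (\<Sum>i\<in>V. \<bar>c i\<bar> *\<^sub>R a i) = Q"
    unfolding Q_def R_def lor_simps sum_distrib_left
    by (intro sum.cong refl) (simp add: lor_comm)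
  have L: "lor (\<Sum>i\<in>V. l i *\<^sub>R a i) (\<Sum>i\<in>V. l i *\<^sub>R a i) = Q / (S * S)"
    unfolding al lor_scale_left lor_scale_right LQ by simp
  have "Q / (S * S) \<le> -1" using Qle Spos by (simp add: divide_le_eq)
  moreover have "Q / (S * S) = -1 \<longrightarrow>
        (\<forall>p\<in>V. \<forall>n\<in>V. c p > 0 \<longrightarrow> c n < 0 \<longrightarrow> lor (a p) (a n) = -1)"
  proof (intro impI ballI)
    fix p n assume h: "Q / (S * S) = -1" "p \<in> V" "n \<in> V" "0 < c p" "c n < 0"
    show "lor (a p) (a n) = -1"
    proof (rule ccontr)
      assume "lor (a p) (a n) \<noteq> -1"
      then have "Q < - S * S" using Qlt h by blast
      then have "Q / (S * S) < -1" using Spos by (simp add: divide_less_eq)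
      then show False using h by simp
    qed
  qed
  ultimately show ?thesis using suml L by (intro exI[of _ l]) auto
qed



lemma sum4: "distinct [x, y, z, w] \<Longrightarrow> sum f {x, y, z, w} = f x + f y + f z + f w"
  by (simp add: add.assoc)

lemma rel_struct:
  assumes s: "side V a" and r: "rel V a c"
    and cross: "\<forall>p\<in>V. \<forall>n\<in>V. c p > 0 \<longrightarrow> c n < 0 \<longrightarrow> lor (a p) (a n) = -1"
  shows "\<exists>p1 p2 n1 n2. V = {p1, p2, n1, n2} \<and> distinct [p1, p2, n1, n2] \<and>
     lor (a p1) (a n1) = -1 \<and> lor (a p1) (a n2) = -1 \<and> lor (a p2) (a n1) = -1 \<and>
     lor (a p2) (a n2) = -1 \<and> lor (a p1) (a p2) < -1 \<and> lor (a n1) (a n2) < -1"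
proof -
  have fin: "finite V" and c4: "card V = 4" using s by (auto simp: side_def)
  let ?P = "{i\<in>V. c i > 0}" and ?N = "{i\<in>V. c i < 0}"
  have cP: "card ?P \<ge> 2" and cN: "card ?N \<ge> 2" using rel_card[OF s r] by auto
  have un: "card (?P \<union> ?N) = card ?P + card ?N" using fin by (intro card_Un_disjoint) auto
  have "card (?P \<union> ?N) \<le> card V" using fin by (intro card_mono) auto
  then have cP2: "card ?P = 2" and cN2: "card ?N = 2" using un cP cN c4 by auto
  have VPN: "?P \<union> ?N = V" using fin un cP2 cN2 c4 by (intro card_subset_eq) auto
  obtain p1 p2 where P: "?P = {p1, p2}" "p1 \<noteq> p2" using cP2 by (auto simp: card_2_iff)
  obtain n1 n2 where N: "?N = {n1, n2}" "n1 \<noteq> n2" using cN2 by (auto simp: card_2_iff)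
  have pv: "p1 \<in> V" "p2 \<in> V" "c p1 > 0" "c p2 > 0" using P by auto
  have nv: "n1 \<in> V" "n2 \<in> V" "c n1 < 0" "c n2 < 0" using N by auto
  have "V = ?P \<union> ?N" using VPN by simp
  also have "\<dots> = {p1, p2} \<union> {n1, n2}" by (simp only: P(1) N(1))
  finally have V: "V = {p1, p2, n1, n2}" by blast
  have d: "distinct [p1, p2, n1, n2]" using P(2) N(2) pv(3,4) nv(3,4) by auto
  have e: "lor (a p1) (a n1) = -1" "lor (a p1) (a n2) = -1" "lor (a p2) (a n1) = -1" "lor (a p2) (a n2) = -1"
    using cross pv nv by auto
  have e': "lor (a n1) (a p1) = -1" "lor (a n2) (a p1) = -1" "lor (a n1) (a p2) = -1" "lor (a n2) (a p2) = -1"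
    using e by (auto simp: lor_comm)
  have one: "lor (a p1) (a p1) = 1" "lor (a n1) (a n1) = 1" using s pv nv by (auto simp: side_def)
  have sc: "c p1 + c p2 + c n1 + c n2 = 0" using r sum4[OF d, of c] unfolding rel_def V[symmetric] by simp
  have f1: "c p1 * 1 + c p2 * lor (a p1) (a p2) + c n1 * (-1) + c n2 * (-1) = 0"
    using rel_F1[OF r pv(1)] sum4[OF d, of "\<lambda>i. c i * lor (a p1) (a i)"] e one unfolding V[symmetric] by simp
  have g1: "c p2 * (lor (a p1) (a p2) + 1) = - 2 * c p1" using f1 sc by (simp add: algebra_simps)
  have i1: "lor (a p1) (a p2) + 1 < 0"
  proof (rule ccontr)
    assume "\<not> ?thesis"
    then have "c p2 * (lor (a p1) (a p2) + 1) \<ge> 0" using pv by simp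
    then show False using g1 pv by simp
  qed
  have f2: "c n1 * 1 + c n2 * lor (a n1) (a n2) + c p1 * (-1) + c p2 * (-1) = 0"
    using rel_F1[OF r nv(1)] sum4[OF d, of "\<lambda>i. c i * lor (a n1) (a i)"] e' one unfolding V[symmetric] by simp
  have g2: "c n2 * (lor (a n1) (a n2) + 1) = - 2 * c n1" using f2 sc by (simp add: algebra_simps)
  have i2: "lor (a n1) (a n2) + 1 < 0"
  proof (rule ccontr)
    assume "\<not> ?thesis"
    then have "c n2 * (lor (a n1) (a n2) + 1) \<le> 0" using nv by (simp add: mult_nonpos_nonneg)
    then show False using g2 nv by simp
  qed
  have i1': "lor (a p1) (a p2) < -1" and i2': "lor (a n1) (a n2) < -1" using i1 i2 by linarith+
  show ?thesis
    apply (rule exI[of _ p1], rule exI[of _ p2], rule exI[of _ n1], rule exI[of _ n2])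
    using V d e i1' i2' by blast
qed

lemma side_timelike:
  assumes s: "side W b"
  shows "lor (\<Sum>j\<in>W. b j) (\<Sum>j\<in>W. b j) < 0"
proof -
  have fin: "finite W" and c4: "card W = 4" using s by (auto simp: side_def)
  have "lor (\<Sum>j\<in>W. b j) (\<Sum>j\<in>W. b j) = (\<Sum>j\<in>W. \<Sum>l\<in>W. lor (b j) (b l))"
    unfolding lor_simps by (intro sum.cong refl) (simp add: lor_comm)
  also have "\<dots> \<le> (\<Sum>j\<in>W. \<Sum>l\<in>W. 2 * (if l = j then 1 else 0) - 1)"
  proof (intro sum_mono)
    fix j l assume "j \<in> W" "l \<in> W"
    then show "lor (b j) (b l) \<le> 2 * (if l = j then 1 else 0) - 1"
      using s by (cases "l = j") (auto simp: side_def)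
  qed
  also have "\<dots> = (\<Sum>j\<in>W. 2 - 4)"
  proof (rule sum.cong[OF refl])
    fix j assume "j \<in> W"
    then show "(\<Sum>l\<in>W. 2 * (if l = j then 1 else 0) - 1) = (2 - 4 :: real)"
      using fin c4 by (simp add: sum_subtractf sum_distrib_left[symmetric])
  qed
  also have "\<dots> < 0" using c4 by simp
  finally show ?thesis .
qed

lemma conv:
  assumes fin: "finite V" and v0: "v0 \<in> V" and P: "P \<subseteq> V - {v0}"
    and z: "(\<Sum>i\<in>P. u i *\<^sub>R (a i - a v0)) = 0" and i: "i \<in> P" "u i \<noteq> 0"
  shows "\<exists>c. rel V a c \<and> (\<forall>i\<in>V. i \<notin> P \<longrightarrow> i \<noteq> v0 \<longrightarrow> c i = 0)"
proof -
  define c where "c k = (if k \<in> P then u k else 0) - (if k = v0 then sum u P else 0)" for k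
  have PV: "V \<inter> P = P" using P by auto
  have s1: "(\<Sum>k\<in>V. c k) = 0"
    using fin v0 by (simp add: c_def sum_subtractf sum.If_cases PV)
  have "(\<Sum>k\<in>V. c k *\<^sub>R a k) = (\<Sum>k\<in>V. (if k \<in> P then u k *\<^sub>R a k else 0)) - (\<Sum>k\<in>V. (if k = v0 then sum u P *\<^sub>R a v0 else 0))"
    unfolding sum_subtractf[symmetric] by (rule sum.cong) (auto simp: c_def scaleR_diff_left)
  also have "\<dots> = (\<Sum>k\<in>P. u k *\<^sub>R a k) - sum u P *\<^sub>R a v0"
    using fin v0 by (simp add: sum.If_cases PV)
  also have "\<dots> = (\<Sum>i\<in>P. u i *\<^sub>R (a i - a v0))"
    by (simp add: scaleR_diff_right sum_subtractf scaleR_sum_left)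
  finally have s2: "(\<Sum>k\<in>V. c k *\<^sub>R a k) = 0" using z by simp
  have "i \<noteq> v0" using i P by auto
  then have "c i \<noteq> 0" using i by (simp add: c_def)
  moreover have "i \<in> V" using i P by auto
  ultimately have "rel V a c" using s1 s2 by (auto simp: rel_def)
  moreover have "\<forall>k\<in>V. k \<notin> P \<longrightarrow> k \<noteq> v0 \<longrightarrow> c k = 0" by (simp add: c_def)
  ultimately show ?thesis by blast
qed



lemma dep2:
  assumes sa: "side V a" and sb: "side W b" and cr: "\<forall>i\<in>V. \<forall>j\<in>W. lor (a i) (b j) = -1"
    and v0: "v0 \<in> V" and w0: "w0 \<in> W" and P: "P \<subseteq> V - {v0}" and Q: "Q \<subseteq> W - {w0}"
    and cd: "card P + card Q \<ge> 5"
  shows "(\<exists>c. rel V a c \<and> (\<forall>i\<in>V. i \<notin> P \<longrightarrow> i \<noteq> v0 \<longrightarrow> c i = 0)) \<or> (\<exists>d. rel W b d)"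
proof -
  have finV: "finite V" using sa by (simp add: side_def)
  have finW: "finite W" using sb by (simp add: side_def)
  have finP: "finite P" using P finV finite_subset by blast
  have finQ: "finite Q" using Q finW finite_subset by blast
  define e5 :: lv where "e5 = (0, 0, 1)"
  define f :: "('a + 'b) option \<Rightarrow> lv" where
    "f t = (case t of None \<Rightarrow> e5 | Some (Inl i) \<Rightarrow> a i - a v0 | Some (Inr j) \<Rightarrow> b j - b w0)" for t
  define I where "I = insert None (Some ` (P <+> Q))"
  have finI: "finite I" using finP finQ by (simp add: I_def)
  have "card I = Suc (card P + card Q)"
    using finP finQ by (simp add: I_def card_insert_disjoint card_image card_Plus)
  then have "card I > DIM(lv)" using cd by simp
  then obtain u where u: "\<exists>t\<in>I. u t \<noteq> 0" "(\<Sum>t\<in>I. u t *\<^sub>R f t) = 0"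
    using dep[OF finI] by blast
  define X where "X = (\<Sum>i\<in>P. u (Some (Inl i)) *\<^sub>R (a i - a v0))"
  define Y where "Y = (\<Sum>j\<in>Q. u (Some (Inr j)) *\<^sub>R (b j - b w0))"
  have "(\<Sum>t\<in>I. u t *\<^sub>R f t) = u None *\<^sub>R e5 + (X + Y)"
    using finP finQ by (simp add: I_def sum.reindex sum.Plus f_def X_def Y_def o_def)
  then have XYe: "X + Y = - (u None *\<^sub>R e5)" using u(2) by (simp add: eq_neg_iff_add_eq_0 add.commute)
  have Xb: "lor X (b j) = 0" if "j \<in> W" for j
  proof -
    have "lor X (b j) = (\<Sum>i\<in>P. u (Some (Inl i)) * (lor (a i) (b j) - lor (a v0) (b j)))"
      by (simp add: X_def lor_simps)
    also have "\<dots> = 0" using P cr v0 that by (intro sum.neutral) auto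
    finally show ?thesis .
  qed
  have Ya: "lor (a i) Y = 0" if "i \<in> V" for i
  proof -
    have "lor (a i) Y = (\<Sum>j\<in>Q. u (Some (Inr j)) * (lor (a i) (b j) - lor (a i) (b w0)))"
      by (simp add: Y_def lor_simps)
    also have "\<dots> = 0" using Q cr w0 that by (intro sum.neutral) auto
    finally show ?thesis .
  qed
  have XY: "lor X Y = 0"
  proof -
    have "lor X Y = (\<Sum>j\<in>Q. u (Some (Inr j)) * (lor X (b j) - lor X (b w0)))"
      by (simp add: Y_def lor_simps)
    also have "\<dots> = 0" using Q Xb w0 by (intro sum.neutral) auto
    finally show ?thesis .
  qed
  have XX: "lor X X \<ge> 0 \<and> (lor X X = 0 \<longrightarrow> X = 0)"
  proof (rule lor_timelike_orth[OF side_timelike[OF sb]])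
    show "lor X (\<Sum>j\<in>W. b j) = 0" using Xb by (simp add: lor_sum_right)
  qed
  have YY: "lor Y Y \<ge> 0 \<and> (lor Y Y = 0 \<longrightarrow> Y = 0)"
  proof (rule lor_timelike_orth[OF side_timelike[OF sa]])
    show "lor Y (\<Sum>i\<in>V. a i) = 0" using Ya by (simp add: lor_sum_right lor_comm)
  qed
  have "lor (X + Y) (X + Y) = lor X X + lor Y Y"
    using XY by (simp add: lor_add_left lor_add_right lor_comm)
  moreover have "lor (X + Y) (X + Y) = - (u None * u None)"
    unfolding XYe by (simp add: lor_minus_left lor_minus_right lor_scale_left lor_scale_right
        e5_def lor_def)
  ultimately have sumeq: "lor X X + lor Y Y = - (u None * u None)" by simp
  have "u None * u None \<ge> 0" by simp
  then have "lor X X = 0" "lor Y Y = 0" "u None * u None = 0" using sumeq XX YY by linarith+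
  then have X0: "X = 0" and Y0: "Y = 0" and un: "u None = 0" using XX YY by auto
  obtain t where t: "t \<in> I" "u t \<noteq> 0" using u(1) by blast
  then obtain s where s: "t = Some s" "s \<in> P <+> Q" using un by (auto simp: I_def)
  show ?thesis
  proof (cases s)
    case (Inl i)
    then have "i \<in> P" "u (Some (Inl i)) \<noteq> 0" using s t by auto
    then show ?thesis using conv[OF finV v0 P, of "\<lambda>i. u (Some (Inl i))" a] X0 unfolding X_def by blast
  next
    case (Inr j)
    then have "j \<in> Q" "u (Some (Inr j)) \<noteq> 0" using s t by auto
    then show ?thesis using conv[OF finW w0 Q, of "\<lambda>j. u (Some (Inr j))" b] Y0 unfolding Y_def by blast
  qed
qed

lemma exists_rel:
  assumes sa: "side V a" and sb: "side W b" and cr: "\<forall>i\<in>V. \<forall>j\<in>W. lor (a i) (b j) = -1"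
  shows "\<exists>d. rel W b d"
proof -
  have finV: "finite V" and cV: "card V = 4" using sa by (auto simp: side_def)
  have finW: "finite W" and cW: "card W = 4" using sb by (auto simp: side_def)
  obtain v0 where v0: "v0 \<in> V" using cV by fastforce
  have c3: "card (V - {v0}) = 3" using finV cV v0 by simp
  have "V - {v0} \<noteq> {}"
  proof
    assume e: "V - {v0} = {}"
    have "card (V - {v0}) = 0" unfolding e by (rule card.empty)
    then show False using c3 by simp
  qed
  then obtain v4 where v4: "v4 \<in> V - {v0}" by blast
  obtain w0 where w0: "w0 \<in> W" using cW by fastforce
  have c1: "card (V - {v0, v4}) = 2" using finV cV v0 v4 by (subst card_Diff_subset) auto
  have c2: "card (W - {w0}) = 3" using finW cW w0 by simp
  have "(\<exists>c. rel V a c \<and> (\<forall>i\<in>V. i \<notin> V - {v0, v4} \<longrightarrow> i \<noteq> v0 \<longrightarrow> c i = 0)) \<or> (\<exists>d. rel W b d)"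
    apply (rule dep2[OF sa sb cr v0 w0, where P="V - {v0, v4}" and Q="W - {w0}"])
      apply blast
     apply blast
    using c1 c2 by linarith
  then show ?thesis
  proof
    assume "\<exists>c. rel V a c \<and> (\<forall>i\<in>V. i \<notin> V - {v0, v4} \<longrightarrow> i \<noteq> v0 \<longrightarrow> c i = 0)"
    then obtain c where c: "rel V a c" "c v4 = 0" using v4 by auto
    then show ?thesis using rel_nonzero[OF sa c(1)] v4 by auto
  qed
qed

lemma alg:
  assumes sa: "side V a" and sb: "side W b" and cr: "\<forall>i\<in>V. \<forall>j\<in>W. lor (a i) (b j) = -1"
  shows "\<exists>p1 p2 n1 n2. V = {p1, p2, n1, n2} \<and> distinct [p1, p2, n1, n2] \<and>
     lor (a p1) (a n1) = -1 \<and> lor (a p1) (a n2) = -1 \<and> lor (a p2) (a n1) = -1 \<and>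
     lor (a p2) (a n2) = -1 \<and> lor (a p1) (a p2) < -1 \<and> lor (a n1) (a n2) < -1"
proof -
  have cr': "\<forall>j\<in>W. \<forall>i\<in>V. lor (b j) (a i) = -1" using cr by (simp add: lor_comm)
  obtain c where c: "rel V a c" using exists_rel[OF sb sa cr'] by blast
  obtain d where d: "rel W b d" using exists_rel[OF sa sb cr] by blast
  obtain l where l: "(\<Sum>i\<in>V. l i) = 1"
    "lor (\<Sum>i\<in>V. l i *\<^sub>R a i) (\<Sum>i\<in>V. l i *\<^sub>R a i) \<le> -1"
    "lor (\<Sum>i\<in>V. l i *\<^sub>R a i) (\<Sum>i\<in>V. l i *\<^sub>R a i) = -1 \<longrightarrow>
        (\<forall>p\<in>V. \<forall>n\<in>V. c p > 0 \<longrightarrow> c n < 0 \<longrightarrow> lor (a p) (a n) = -1)"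
    using rel_alpha[OF sa c] by blast
  obtain m where m: "(\<Sum>j\<in>W. m j) = 1"
    "lor (\<Sum>j\<in>W. m j *\<^sub>R b j) (\<Sum>j\<in>W. m j *\<^sub>R b j) \<le> -1"
    using rel_alpha[OF sb d] by blast
  define \<alpha> where "\<alpha> = (\<Sum>i\<in>V. l i *\<^sub>R a i)"
  define \<beta> where "\<beta> = (\<Sum>j\<in>W. m j *\<^sub>R b j)"
  have "lor \<alpha> \<beta> = (\<Sum>j\<in>W. m j * (\<Sum>i\<in>V. l i * lor (a i) (b j)))"
    by (simp add: \<alpha>_def \<beta>_def lor_simps)
  also have "\<dots> = (\<Sum>j\<in>W. m j * (\<Sum>i\<in>V. l i * (-1)))"
    using cr by (intro sum.cong refl) auto
  also have "\<dots> = -1" using l(1) m(1) by (simp add: sum_distrib_right[symmetric] sum_negf)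
  finally have ab: "lor \<alpha> \<beta> = -1" .
  have aa: "lor \<alpha> \<alpha> \<le> -1" and bb: "lor \<beta> \<beta> \<le> -1" using l m by (auto simp: \<alpha>_def \<beta>_def)
  have "lor \<alpha> \<alpha> * lor \<beta> \<beta> \<le> (lor \<alpha> \<beta>)^2" using aa by (intro reverse_cs) auto
  then have prod: "lor \<alpha> \<alpha> * lor \<beta> \<beta> \<le> 1" using ab by simp
  have "lor \<alpha> \<alpha> = -1"
  proof (rule ccontr)
    assume "lor \<alpha> \<alpha> \<noteq> -1"
    then have "lor \<alpha> \<alpha> < -1" using aa by simp
    moreover have "lor \<alpha> \<alpha> * lor \<beta> \<beta> \<ge> lor \<alpha> \<alpha> * (-1)"
      using aa bb by (intro mult_left_mono_neg) auto
    ultimately show False using prod by simp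
  qed
  then have "\<forall>p\<in>V. \<forall>n\<in>V. c p > 0 \<longrightarrow> c n < 0 \<longrightarrow> lor (a p) (a n) = -1" using l(3) \<alpha>_def by simp
  then show ?thesis using rel_struct[OF sa c] by blast
qed



definition cvec :: "real^3 \<Rightarrow> real \<Rightarrow> lv" where
  "cvec c r = ((1/r) *\<^sub>R c, (norm c ^ 2 - r ^ 2 - 1) / (2 * r), (norm c ^ 2 - r ^ 2 + 1) / (2 * r))"

fun Lvec :: "ball3 \<Rightarrow> lv" where
  "Lvec (CBall c r) = cvec c r"
| "Lvec (Exterior c r) = - cvec c r"
| "Lvec (HalfSpace a h) = (- (1 / norm a) *\<^sub>R a, - h / norm a, - h / norm a)"

lemma lor_cvec:
  assumes "r1 > 0" "r2 > 0"
  shows "lor (cvec c1 r1) (cvec c2 r2) = (r1^2 + r2^2 - (dist c1 c2)^2) / (2 * r1 * r2)"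
proof -
  have d: "(dist c1 c2)^2 = norm c1 ^ 2 + norm c2 ^ 2 - 2 * (c1 \<bullet> c2)"
    by (simp add: dist_norm power2_norm_eq_inner inner_diff_left inner_diff_right inner_commute)
  show ?thesis using assms unfolding d
    by (simp add: lor_def cvec_def field_simps power2_eq_square)
qed

lemma lor_cvec_self: "r > 0 \<Longrightarrow> lor (cvec c r) (cvec c r) = 1"
  by (simp add: lor_cvec power2_eq_square)

lemma lor_cvec_half:
  assumes "r > 0" "a \<noteq> 0"
  shows "lor (cvec c r) (Lvec (HalfSpace a h)) = (h - a \<bullet> c) / (r * norm a)"
  using assms by (simp add: lor_def cvec_def field_simps inner_commute power2_eq_square)

lemma lor_half_self: "a \<noteq> 0 \<Longrightarrow> lor (Lvec (HalfSpace a h)) (Lvec (HalfSpace a h)) = 1"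
  by (simp add: lor_def dot_square_norm power2_eq_square field_simps)

lemma Lvec_norm: "valid_ball3 B \<Longrightarrow> lor (Lvec B) (Lvec B) = 1"
proof (cases B)
  case (HalfSpace a h)
  assume "valid_ball3 B"
  then show ?thesis using lor_half_self[of a h] HalfSpace by (simp del: Lvec.simps)
qed (auto simp: lor_cvec_self lor_minus_left lor_minus_right)

lemma cvec_inj: "r > 0 \<Longrightarrow> R > 0 \<Longrightarrow> cvec c r = cvec e R \<Longrightarrow> c = e \<and> r = R"
proof -
  assume r: "r > 0" "R > 0" and eq: "cvec c r = cvec e R"
  have "snd (snd (cvec c r)) - fst (snd (cvec c r)) = 1 / r" using r by (simp add: cvec_def field_simps)
  moreover have "snd (snd (cvec e R)) - fst (snd (cvec e R)) = 1 / R" using r by (simp add: cvec_def field_simps)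
  ultimately have "1 / r = 1 / R" using eq by simp
  then have rR: "r = R" using r by (simp add: field_simps)
  have "(1/r) *\<^sub>R c = (1/R) *\<^sub>R e" using eq by (simp add: cvec_def)
  then have "c = e" using rR r by simp
  then show ?thesis using rR by simp
qed



lemma unit_dir: "\<exists>u::real^3. norm u = 1 \<and> x = norm x *\<^sub>R u"
proof (cases "x = 0")
  case True then show ?thesis by (intro exI[of _ "axis 1 1"]) simp
next
  case False then show ?thesis by (intro exI[of _ "(1 / norm x) *\<^sub>R x"]) simp
qed

lemma ex1_from: "x0 \<in> S \<Longrightarrow> (\<And>x. x \<in> S \<Longrightarrow> x = q) \<Longrightarrow> \<exists>!x. x \<in> S"
  by blast

lemma solve_scale: "(k::real) \<noteq> 0 \<Longrightarrow> k *\<^sub>R (x::real^3) = y \<Longrightarrow> x = (1 / k) *\<^sub>R y"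
proof -
  assume k: "k \<noteq> 0" and h: "k *\<^sub>R x = y"
  have "(1/k) *\<^sub>R y = ((1/k) * k) *\<^sub>R x" unfolding h[symmetric] by (rule scaleR_scaleR)
  then show ?thesis using k by simp
qed

lemma cc_disj:
  fixes c1 c2 :: "real^3"
  assumes r: "r1 > 0" "r2 > 0" and dj: "ball c1 r1 \<inter> ball c2 r2 = {}"
  shows "dist c1 c2 \<ge> r1 + r2"
proof (rule ccontr)
  assume "\<not> ?thesis"
  then have dl: "dist c1 c2 < r1 + r2" by simp
  define d where "d = dist c1 c2"
  define t where "t = r1 / (r1 + r2)"
  define p where "p = c1 + t *\<^sub>R (c2 - c1)"
  have t0: "t \<ge> 0" "1 - t = r2 / (r1 + r2)" using r by (auto simp: t_def field_simps)
  have nd: "norm (c2 - c1) = d" by (simp add: d_def dist_norm norm_minus_commute)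
  have "dist c1 p = norm (t *\<^sub>R (c2 - c1))" by (simp add: dist_norm p_def)
  also have "\<dots> = t * d" using t0 nd by simp
  also have "\<dots> < r1"
  proof -
    have "r1 * d < r1 * (r1 + r2)" using dl r by (simp add: d_def)
    then show ?thesis using r by (simp add: t_def field_simps)
  qed
  finally have p1: "p \<in> ball c1 r1" by simp
  have "c2 - p = (1 - t) *\<^sub>R (c2 - c1)" by (simp add: p_def algebra_simps)
  then have "dist c2 p = (1 - t) * d" using t0 nd r by (simp add: dist_norm)
  also have "\<dots> < r2"
  proof -
    have "r2 * d < r2 * (r1 + r2)" using dl r by (simp add: d_def)
    then show ?thesis using r unfolding t0(2) by (simp add: field_simps)
  qed
  finally have p2: "p \<in> ball c2 r2" by simp
  show False using p1 p2 dj by blast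
qed

lemma cc_tan:
  fixes c1 c2 :: "real^3"
  assumes r: "r1 > 0" "r2 > 0" and dge: "dist c1 c2 \<ge> r1 + r2"
  shows "(\<exists>!x. x \<in> cball c1 r1 \<inter> cball c2 r2) \<longleftrightarrow> dist c1 c2 = r1 + r2"
proof
  assume "\<exists>!x. x \<in> cball c1 r1 \<inter> cball c2 r2"
  then obtain x where x: "dist c1 x \<le> r1" "dist c2 x \<le> r2" by auto
  have "dist c1 c2 \<le> dist c1 x + dist x c2" by (rule dist_triangle)
  then have "dist c1 c2 \<le> r1 + r2" using x by (simp add: dist_commute)
  then show "dist c1 c2 = r1 + r2" using dge by simp
next
  assume de: "dist c1 c2 = r1 + r2"
  define d where "d = dist c1 c2"
  have nd: "norm (c2 - c1) = d" by (simp add: d_def dist_norm norm_minus_commute)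
  have dpos: "d > 0" using de r by (simp add: d_def)
  define p where "p = c1 + (r1 / d) *\<^sub>R (c2 - c1)"
  have "dist c1 p = norm ((r1 / d) *\<^sub>R (c2 - c1))" by (simp add: dist_norm p_def)
  also have "\<dots> = r1" using nd dpos r by simp
  finally have p1: "dist c1 p = r1" .
  have "c2 - p = (1 - r1 / d) *\<^sub>R (c2 - c1)" by (simp add: p_def algebra_simps)
  moreover have "1 - r1 / d = r2 / d" using dpos de by (simp add: d_def field_simps)
  ultimately have "dist c2 p = norm ((r2 / d) *\<^sub>R (c2 - c1))" by (simp add: dist_norm)
  also have "\<dots> = r2" using nd dpos r by simp
  finally have p2: "dist c2 p = r2" .
  show "\<exists>!x. x \<in> cball c1 r1 \<inter> cball c2 r2"
  proof (rule ex1_from)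
    show "p \<in> cball c1 r1 \<inter> cball c2 r2" using p1 p2 by simp
  next
    fix x assume "x \<in> cball c1 r1 \<inter> cball c2 r2"
    then have x: "norm (x - c1) \<le> r1" "norm (c2 - x) \<le> r2"
      by (auto simp: dist_norm norm_minus_commute)
    have sum: "(x - c1) + (c2 - x) = c2 - c1" by simp
    have "d \<le> norm (x - c1) + norm (c2 - x)" using norm_triangle_ineq[of "x - c1" "c2 - x"] sum nd by simp
    then have e1: "norm (x - c1) = r1" and e2: "norm (c2 - x) = r2" using x de by (simp_all add: d_def)
    have "norm ((x - c1) + (c2 - x)) = norm (x - c1) + norm (c2 - x)" using sum nd e1 e2 de by (simp add: d_def)
    then have "norm (x - c1) *\<^sub>R (c2 - x) = norm (c2 - x) *\<^sub>R (x - c1)" by (simp only: norm_triangle_eq)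
    then have "r1 *\<^sub>R (c2 - x) = r2 *\<^sub>R (x - c1)" using e1 e2 by simp
    then have "(r1 + r2) *\<^sub>R x = r1 *\<^sub>R c2 + r2 *\<^sub>R c1" by (simp add: algebra_simps)
    then show "x = (1 / (r1 + r2)) *\<^sub>R (r1 *\<^sub>R c2 + r2 *\<^sub>R c1)" using r by (intro solve_scale) auto
  qed
qed


lemma ce_disj:
  fixes c e :: "real^3"
  assumes r: "r > 0" and dj: "ball c r \<inter> - cball e R = {}"
  shows "dist c e + r \<le> R"
proof (rule ccontr)
  assume "\<not> ?thesis"
  then have lt: "R - dist c e < r" by simp
  define d where "d = dist c e"
  obtain u where u: "norm u = 1" "c - e = norm (c - e) *\<^sub>R u" using unit_dir by blast
  have ce: "c - e = d *\<^sub>R u" using u by (simp add: d_def dist_norm)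
  have d0: "d \<ge> 0" by (simp add: d_def)
  define t where "t = (max (R - d) 0 + r) / 2"
  have t: "t \<ge> 0" "t < r" "t > R - d" using lt r by (auto simp: t_def d_def)
  define p where "p = c + t *\<^sub>R u"
  have "dist c p = t" using u t by (simp add: p_def dist_norm)
  then have p1: "p \<in> ball c r" using t by simp
  have pe: "p - e = (d + t) *\<^sub>R u" using ce by (simp add: p_def algebra_simps)
  have "dist e p = norm (p - e)" by (simp add: dist_norm norm_minus_commute)
  also have "\<dots> = d + t" using pe u t d0 by simp
  finally have "dist e p = d + t" .
  then have p2: "p \<in> - cball e R" using t by simp
  show False using p1 p2 dj by blast
qed

lemma ce_tan1:
  fixes c e :: "real^3"
  assumes r: "r > 0" and le: "dist c e + r \<le> R" and ex: "\<exists>!x. x \<in> cball c r \<inter> - ball e R"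
  shows "dist c e + r = R"
proof (rule ccontr)
  assume "\<not> ?thesis"
  then have lt: "dist c e + r < R" using le by simp
  obtain x where x: "dist c x \<le> r" "\<not> dist e x < R" using ex by auto
  have "dist e x \<le> dist e c + dist c x" by (rule dist_triangle)
  then show False using x lt by (simp add: dist_commute)
qed

lemma ce_tan2:
  fixes c e :: "real^3"
  assumes r: "r > 0" and de: "dist c e + r = R" and ne: "c \<noteq> e"
  shows "\<exists>!x. x \<in> cball c r \<inter> - ball e R"
proof -
  define d where "d = dist c e"
  have dpos: "d > 0" using ne by (simp add: d_def)
  define u where "u = (1 / d) *\<^sub>R (c - e)"
  have nu: "norm u = 1" using dpos by (simp add: u_def d_def dist_norm)
  have ce: "c - e = d *\<^sub>R u" using dpos by (simp add: u_def)
  define p where "p = c + r *\<^sub>R u"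
  have p1: "dist c p = r" using nu r by (simp add: p_def dist_norm)
  have pe: "p - e = (d + r) *\<^sub>R u" using ce by (simp add: p_def algebra_simps)
  have "dist e p = norm (p - e)" by (simp add: dist_norm norm_minus_commute)
  also have "\<dots> = d + r" using pe nu r dpos by simp
  finally have "dist e p = d + r" .
  then have p2: "dist e p = R" using de by (simp add: d_def)
  show ?thesis
  proof (rule ex1_from)
    show "p \<in> cball c r \<inter> - ball e R" using p1 p2 by simp
  next
    fix x assume "x \<in> cball c r \<inter> - ball e R"
    then have x: "norm (x - c) \<le> r" "norm (x - e) \<ge> R"
      by (auto simp: dist_norm norm_minus_commute)
    have sum: "(x - c) + (c - e) = x - e" by simp
    have nce: "norm (c - e) = d" by (simp add: d_def dist_norm)
    have "norm (x - e) \<le> norm (x - c) + norm (c - e)" using norm_triangle_ineq[of "x - c" "c - e"] sum by simp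
    then have e1: "norm (x - c) = r" and e2: "norm (x - e) = R" using x de nce by (simp_all add: d_def)
    have "norm ((x - c) + (c - e)) = norm (x - c) + norm (c - e)" using sum nce e1 e2 de by (simp add: d_def)
    then have "norm (x - c) *\<^sub>R (c - e) = norm (c - e) *\<^sub>R (x - c)" by (simp only: norm_triangle_eq)
    then have "r *\<^sub>R (c - e) = d *\<^sub>R (x - c)" using e1 nce by simp
    then have "d *\<^sub>R x = d *\<^sub>R c + r *\<^sub>R (c - e)" by (simp add: algebra_simps)
    then show "x = (1 / d) *\<^sub>R (d *\<^sub>R c + r *\<^sub>R (c - e))" using dpos by (intro solve_scale) auto
  qed
qed

lemma ch_disj:
  fixes c a :: "real^3"
  assumes r: "r > 0" and a: "a \<noteq> 0" and dj: "ball c r \<inter> {x. a \<bullet> x < h} = {}"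
  shows "a \<bullet> c - r * norm a \<ge> h"
proof (rule ccontr)
  assume "\<not> ?thesis"
  then have lt: "a \<bullet> c - h < r * norm a" by simp
  have na: "norm a > 0" using a by simp
  define q where "q = (a \<bullet> c - h) / norm a"
  have q: "q < r" using lt na by (simp add: q_def field_simps)
  define n where "n = (1 / norm a) *\<^sub>R a"
  have nn: "norm n = 1" and an: "a \<bullet> n = norm a" using na
    by (auto simp: n_def dot_square_norm power2_eq_square)
  define t where "t = (max q 0 + r) / 2"
  have t: "t \<ge> 0" "t < r" "t > q" using q r by (auto simp: t_def)
  define p where "p = c - t *\<^sub>R n"
  have "dist c p = t" using nn t by (simp add: p_def dist_norm)
  then have p1: "p \<in> ball c r" using t by simp
  have "a \<bullet> p = a \<bullet> c - t * norm a" using an by (simp add: p_def inner_diff_right)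
  moreover have "t * norm a > a \<bullet> c - h" using t na by (simp add: q_def field_simps)
  ultimately have p2: "p \<in> {x. a \<bullet> x < h}" by simp
  show False using p1 p2 dj by blast
qed

lemma ch_tan:
  fixes c a :: "real^3"
  assumes r: "r > 0" and a: "a \<noteq> 0" and ge: "a \<bullet> c - r * norm a \<ge> h"
  shows "(\<exists>!x. x \<in> cball c r \<inter> {x. a \<bullet> x \<le> h}) \<longleftrightarrow> a \<bullet> c - r * norm a = h"
proof
  assume "\<exists>!x. x \<in> cball c r \<inter> {x. a \<bullet> x \<le> h}"
  then obtain x where x: "norm (c - x) \<le> r" "a \<bullet> x \<le> h" by (auto simp: dist_norm)
  have "a \<bullet> (c - x) \<le> norm a * norm (c - x)" by (rule norm_cauchy_schwarz)
  also have "\<dots> \<le> norm a * r" using x by (intro mult_left_mono) auto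
  finally have "a \<bullet> c - r * norm a \<le> a \<bullet> x" by (simp add: inner_diff_right algebra_simps)
  then show "a \<bullet> c - r * norm a = h" using x ge by simp
next
  assume eq: "a \<bullet> c - r * norm a = h"
  have na: "norm a > 0" using a by simp
  define n where "n = (1 / norm a) *\<^sub>R a"
  have nn: "norm n = 1" and an: "a \<bullet> n = norm a" using na
    by (auto simp: n_def dot_square_norm power2_eq_square)
  define p where "p = c - r *\<^sub>R n"
  have p1: "dist c p = r" using nn r by (simp add: p_def dist_norm)
  have p2: "a \<bullet> p = h" using an eq by (simp add: p_def inner_diff_right)
  show "\<exists>!x. x \<in> cball c r \<inter> {x. a \<bullet> x \<le> h}"
  proof (rule ex1_from)
    show "p \<in> cball c r \<inter> {x. a \<bullet> x \<le> h}" using p1 p2 by simp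
  next
    fix x assume "x \<in> cball c r \<inter> {x. a \<bullet> x \<le> h}"
    then have x: "norm (c - x) \<le> r" "a \<bullet> x \<le> h" by (auto simp: dist_norm)
    have cs: "a \<bullet> (c - x) \<le> norm a * norm (c - x)" by (rule norm_cauchy_schwarz)
    have m: "norm a * norm (c - x) \<le> norm a * r" using x by (intro mult_left_mono) auto
    have "a \<bullet> (c - x) \<ge> r * norm a" using x eq by (simp add: inner_diff_right)
    then have ge': "a \<bullet> (c - x) \<ge> norm a * r" by (simp add: mult.commute)
    have e1: "a \<bullet> (c - x) = norm a * norm (c - x)" using cs m ge' by linarith
    have "norm a * norm (c - x) = norm a * r" using cs m ge' by linarith
    then have e2: "norm (c - x) = r" using na by simp
    have "norm a *\<^sub>R (c - x) = norm (c - x) *\<^sub>R a" using e1 by (simp only: norm_cauchy_schwarz_eq)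
    then have "norm a *\<^sub>R (c - x) = r *\<^sub>R a" using e2 by simp
    then have "norm a *\<^sub>R x = norm a *\<^sub>R c - r *\<^sub>R a" by (simp add: algebra_simps)
    then show "x = (1 / norm a) *\<^sub>R (norm a *\<^sub>R c - r *\<^sub>R a)" using na by (intro solve_scale) auto
  qed
qed



lemma some_inter: "Some ` A \<inter> Some ` B = Some ` (A \<inter> B)"
  by auto
lemma some_ins_inter: "Some ` A \<inter> insert None (Some ` B) = Some ` (A \<inter> B)"
  by auto
lemma ex1_some: "(\<exists>!p. p \<in> Some ` S) \<longleftrightarrow> (\<exists>!x. x \<in> S)"
  by (auto simp: Ex1_def)
lemma some_empty: "Some ` S = {} \<longleftrightarrow> S = {}"
  by auto

lemma tangent3_comm: "tangent3 B B' = tangent3 B' B"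
  by (simp add: tangent3_def Int_commute)

definition good :: "ball3 \<Rightarrow> ball3 \<Rightarrow> bool" where
  "good B B' \<longleftrightarrow> lor (Lvec B) (Lvec B') \<le> -1 \<and> (tangent3 B B' \<longrightarrow> lor (Lvec B) (Lvec B') = -1)
     \<and> (lor (Lvec B) (Lvec B') = -1 \<longrightarrow> Lvec B' \<noteq> - Lvec B \<longrightarrow> tangent3 B B')"

lemma good_comm: "good B B' \<Longrightarrow> good B' B"
  unfolding good_def by (auto simp: lor_comm tangent3_comm minus_equation_iff)

lemma pair_CC:
  assumes r: "r > 0" "r2 > 0" and dj: "ball c r \<inter> ball c2 r2 = {}"
  shows "good (CBall c r) (CBall c2 r2)"
proof -
  define d where "d = dist c c2"
  have dge: "d \<ge> r + r2" using cc_disj[OF r dj] by (simp add: d_def)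
  have L: "lor (Lvec (CBall c r)) (Lvec (CBall c2 r2)) = (r^2 + r2^2 - d^2) / (2 * r * r2)"
    using lor_cvec[OF r] by (simp add: d_def)
  have den: "2 * r * r2 > 0" using r by simp
  have sq: "d^2 \<ge> (r + r2)^2" using dge r by (intro power_mono) auto
  have le: "(r^2 + r2^2 - d^2) / (2 * r * r2) \<le> -1"
    using den sq by (simp add: divide_le_eq power2_sum)
  have eqv: "(r^2 + r2^2 - d^2) / (2 * r * r2) = -1 \<longleftrightarrow> d = r + r2"
  proof -
    have "(r^2 + r2^2 - d^2) / (2 * r * r2) = -1 \<longleftrightarrow> d^2 = (r + r2)^2"
      using den by (auto simp: divide_eq_eq power2_sum)
    also have "\<dots> \<longleftrightarrow> d = r + r2" using r by (simp add: d_def)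
    finally show ?thesis .
  qed
  have T: "tangent3 (CBall c r) (CBall c2 r2) \<longleftrightarrow> d = r + r2"
    unfolding tangent3_def ball3_set.simps some_inter ex1_some d_def
    using cc_tan[OF r] dge by (simp add: d_def)
  show ?thesis unfolding good_def L using le eqv T by blast
qed

lemma pair_CE:
  assumes r: "r > 0" "R > 0" and dj: "ball c r \<inter> - cball e R = {}"
  shows "good (CBall c r) (Exterior e R)"
proof -
  define d where "d = dist c e"
  have dle: "d + r \<le> R" using ce_disj[OF r(1) dj] by (simp add: d_def)
  have d0: "d \<ge> 0" by (simp add: d_def)
  have L: "lor (Lvec (CBall c r)) (Lvec (Exterior e R)) = - ((r^2 + R^2 - d^2) / (2 * r * R))"
    using lor_cvec[OF r, of c e] by (simp add: d_def lor_minus_right)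
  have den: "2 * r * R > 0" using r by simp
  have sq: "d^2 \<le> (R - r)^2" using dle d0 by (intro power_mono) auto
  have rr: "(R - r)^2 = r^2 + R^2 - 2 * r * R" by (simp add: power2_diff algebra_simps)
  then have "2 * r * R \<le> r^2 + R^2 - d^2" using sq by linarith
  then have "1 \<le> (r^2 + R^2 - d^2) / (2 * r * R)" using den by (simp add: le_divide_eq)
  then have le: "- ((r^2 + R^2 - d^2) / (2 * r * R)) \<le> -1" by linarith
  have eqv: "- ((r^2 + R^2 - d^2) / (2 * r * R)) = -1 \<longleftrightarrow> d + r = R"
  proof -
    have "- ((r^2 + R^2 - d^2) / (2 * r * R)) = -1 \<longleftrightarrow> r^2 + R^2 - d^2 = 2 * r * R"
      using den by (auto simp: divide_eq_eq)
    also have "\<dots> \<longleftrightarrow> d^2 = (R - r)^2" using rr by (intro iffI) linarith+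
    also have "\<dots> \<longleftrightarrow> d = R - r" using dle d0 by (intro power2_eq_iff_nonneg) auto
    finally show ?thesis by auto
  qed
  have T: "tangent3 (CBall c r) (Exterior e R) \<longleftrightarrow> (\<exists>!x. x \<in> cball c r \<inter> - ball e R)"
    unfolding tangent3_def ball3_set.simps some_ins_inter ex1_some by simp
  show ?thesis unfolding good_def L
  proof (intro conjI impI)
    show "- ((r^2 + R^2 - d^2) / (2 * r * R)) \<le> -1" by (rule le)
  next
    assume "tangent3 (CBall c r) (Exterior e R)"
    then have "d + r = R" using ce_tan1[OF r(1)] dle T by (simp add: d_def)
    then show "- ((r^2 + R^2 - d^2) / (2 * r * R)) = -1" using eqv by blast
  next
    assume h: "- ((r^2 + R^2 - d^2) / (2 * r * R)) = -1" "Lvec (Exterior e R) \<noteq> - Lvec (CBall c r)"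
    have de: "d + r = R" using eqv h(1) by blast
    have ne: "cvec e R \<noteq> cvec c r" using h(2) by simp
    have "c \<noteq> e"
    proof
      assume "c = e"
      then have "r = R" using de by (simp add: d_def)
      then show False using ne \<open>c = e\<close> by simp
    qed
    then have "\<exists>!x. x \<in> cball c r \<inter> - ball e R" using ce_tan2[OF r(1) de[unfolded d_def]] by blast
    then show "tangent3 (CBall c r) (Exterior e R)" using T by blast
  qed
qed

lemma pair_CH:
  assumes r: "r > 0" and a: "a \<noteq> 0" and dj: "ball c r \<inter> {x. a \<bullet> x < h} = {}"
  shows "good (CBall c r) (HalfSpace a h)"
proof -
  have ge: "a \<bullet> c - r * norm a \<ge> h" using ch_disj[OF r a dj] .
  have den: "r * norm a > 0" using r a by simp
  have L: "lor (Lvec (CBall c r)) (Lvec (HalfSpace a h)) = (h - a \<bullet> c) / (r * norm a)"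
    using lor_cvec_half[OF r a] by (simp del: Lvec.simps(3))
  have le: "(h - a \<bullet> c) / (r * norm a) \<le> -1" using den ge by (simp add: divide_le_eq)
  have eqv: "(h - a \<bullet> c) / (r * norm a) = -1 \<longleftrightarrow> a \<bullet> c - r * norm a = h"
    using den by (auto simp: divide_eq_eq)
  have T: "tangent3 (CBall c r) (HalfSpace a h) \<longleftrightarrow> a \<bullet> c - r * norm a = h"
    unfolding tangent3_def ball3_set.simps some_ins_inter ex1_some using ch_tan[OF r a ge] by simp
  show ?thesis unfolding good_def L using le eqv T by blast
qed

lemma pair_good:
  assumes v: "valid_ball3 B" "valid_ball3 B'" and dj: "ball3_interior B \<inter> ball3_interior B' = {}"
  shows "good B B'"
proof -
  have C: "good (CBall c r) B2" if "valid_ball3 (CBall c r)" "valid_ball3 B2"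
    "ball3_interior (CBall c r) \<inter> ball3_interior B2 = {}" for c r B2
  proof (cases B2)
    case (CBall c2 r2)
    then show ?thesis using that pair_CC[of r r2 c c2] by (simp add: some_inter some_empty)
  next
    case (Exterior e R)
    then show ?thesis using that pair_CE[of r R c e] by (simp add: some_ins_inter some_empty)
  next
    case (HalfSpace a h)
    then show ?thesis using that pair_CH[of r a c h] by (simp add: some_ins_inter some_empty)
  qed
  show ?thesis
  proof (cases B)
    case (CBall c r)
    then show ?thesis using C v dj by blast
  next
    case (Exterior e R)
    show ?thesis
    proof (cases B')
      case (CBall c r)
      then have "good B' B" using C v dj by (simp add: Int_commute)
      then show ?thesis by (rule good_comm)
    qed (use dj Exterior in auto)
  next
    case (HalfSpace e R)
    show ?thesis
    proof (cases B')
      case (CBall c r)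
      then have "good B' B" using C v dj by (simp add: Int_commute)
      then show ?thesis by (rule good_comm)
    qed (use dj HalfSpace in auto)
  qed
qed



lemma iso_C4:
  assumes sg: "simple_graph V E" and V: "V = {p1, p2, n1, n2}" and d: "distinct [p1, p2, n1, n2]"
    and e: "E p1 n1" "E p1 n2" "E p2 n1" "E p2 n2" and ne: "\<not> E p1 p2" "\<not> E n1 n2"
  shows "graph_iso V E C4_verts C4_edges"
proof -
  have sym: "E x y \<Longrightarrow> E y x" and irr: "\<not> E x x" for x y using sg by (auto simp: simple_graph_def)
  have e': "E n1 p1" "E n2 p1" "E n1 p2" "E n2 p2" using e sym by auto
  have ne': "\<not> E p2 p1" "\<not> E n2 n1" using ne sym by auto
  define f :: "_ \<Rightarrow> nat" where "f x = (if x = p1 then 0 else if x = n1 then 1 else if x = p2 then 2 else 3)" for x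
  have fv: "f p1 = 0" "f n1 = 1" "f p2 = 2" "f n2 = 3" using d by (auto simp: f_def)
  have inj: "inj_on f V" unfolding V inj_on_def using fv by auto
  have img: "f ` V = C4_verts" unfolding V C4_verts_def using fv by auto
  have bij: "bij_betw f V C4_verts" using inj img by (simp add: bij_betw_def)
  have C: "C4_edges 0 1" "C4_edges 1 2" "C4_edges 2 3" "C4_edges 3 0"
          "C4_edges 1 0" "C4_edges 2 1" "C4_edges 3 2" "C4_edges 0 3"
          "\<not> C4_edges 0 2" "\<not> C4_edges 2 0" "\<not> C4_edges 1 3" "\<not> C4_edges 3 1"
          "\<not> C4_edges 0 0" "\<not> C4_edges 1 1" "\<not> C4_edges 2 2" "\<not> C4_edges 3 3"
    by (simp_all add: C4_edges_def)
  have "\<forall>x\<in>V. \<forall>y\<in>V. E x y \<longleftrightarrow> C4_edges (f x) (f y)"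
    unfolding V using fv C e e' ne ne' irr by auto
  then show ?thesis unfolding graph_iso_def using bij by blast
qed



lemma side_graph:
  fixes V :: "'a set" and W :: "'b set" and a :: "'a \<Rightarrow> lv" and bb :: "'b \<Rightarrow> lv"
  assumes sa: "side V a" and sb: "side W bb" and cr: "\<forall>i\<in>V. \<forall>j\<in>W. lor (a i) (bb j) = -1"
    and sg: "simple_graph V E"
    and edge: "\<forall>i\<in>V. \<forall>k\<in>V. i \<noteq> k \<longrightarrow> (E i k \<longleftrightarrow> lor (a i) (a k) = -1)"
  shows "graph_iso V E C4_verts C4_edges"
proof -
  obtain p1 p2 n1 n2 where s: "V = {p1, p2, n1, n2}" "distinct [p1, p2, n1, n2]"
     "lor (a p1) (a n1) = -1" "lor (a p1) (a n2) = -1" "lor (a p2) (a n1) = -1"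
     "lor (a p2) (a n2) = -1" "lor (a p1) (a p2) < -1" "lor (a n1) (a n2) < -1"
    using alg[OF sa sb cr] by blast
  have inV: "p1 \<in> V" "p2 \<in> V" "n1 \<in> V" "n2 \<in> V" unfolding s(1) by simp_all
  show ?thesis
  proof (rule iso_C4[OF sg s(1) s(2)])
    have d: "p1 \<noteq> n1" "p1 \<noteq> n2" "p2 \<noteq> n1" "p2 \<noteq> n2" "p1 \<noteq> p2" "n1 \<noteq> n2" using s(2) by auto
    have ed: "E x y \<longleftrightarrow> lor (a x) (a y) = -1" if "x \<in> V" "y \<in> V" "x \<noteq> y" for x y
      using edge that by blast
    show "E p1 n1" using ed[OF inV(1) inV(3) d(1)] s(3) by simp
    show "E p1 n2" using ed[OF inV(1) inV(4) d(2)] s(4) by simp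
    show "E p2 n1" using ed[OF inV(2) inV(3) d(3)] s(5) by simp
    show "E p2 n2" using ed[OF inV(2) inV(4) d(4)] s(6) by simp
    show "\<not> E p1 p2" using ed[OF inV(1) inV(2) d(5)] s(7) by simp
    show "\<not> E n1 n2" using ed[OF inV(3) inV(4) d(6)] s(8) by simp
  qed
qed

theorem corollary3p10:
  fixes V :: "'a set" and E :: "'a \<Rightarrow> 'a \<Rightarrow> bool"
    and W :: "'b set" and F :: "'b \<Rightarrow> 'b \<Rightarrow> bool"
  assumes "simple_graph V E" and "card V = 4"
    and "simple_graph W F" and "card W = 4"
    and "ball_packable3 (join_verts V W) (join_edges V E W F)"
  shows "graph_iso V E C4_verts C4_edges \<and> graph_iso W F C4_verts C4_edges"
proof -
  obtain bl :: "'a + 'b \<Rightarrow> ball3" where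
    vb: "\<forall>v\<in>join_verts V W. valid_ball3 (bl v)" and inj: "inj_on bl (join_verts V W)" and
    dj: "\<forall>u\<in>join_verts V W. \<forall>v\<in>join_verts V W. u \<noteq> v \<longrightarrow> ball3_interior (bl u) \<inter> ball3_interior (bl v) = {}" and
    tg: "\<forall>u\<in>join_verts V W. \<forall>v\<in>join_verts V W. u \<noteq> v \<longrightarrow> (join_edges V E W F u v \<longleftrightarrow> tangent3 (bl u) (bl v))"
    using assms(5) unfolding ball_packable3_def
    apply (elim exE conjE)
    apply (rule that)
       apply assumption+
    done
  have finV: "finite V" using assms(1) by (simp add: simple_graph_def)
  have finW: "finite W" using assms(3) by (simp add: simple_graph_def)
  have JL: "Inl i \<in> join_verts V W \<longleftrightarrow> i \<in> V" for i by (auto simp: join_verts_def)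
  have JR: "Inr j \<in> join_verts V W \<longleftrightarrow> j \<in> W" for j by (auto simp: join_verts_def)
  have gd: "good (bl u) (bl v)" if "u \<in> join_verts V W" "v \<in> join_verts V W" "u \<noteq> v" for u v
    using pair_good vb dj that by blast
  have nrm: "lor (Lvec (bl u)) (Lvec (bl u)) = 1" if "u \<in> join_verts V W" for u
    using Lvec_norm vb that by blast
  define a where "a i = Lvec (bl (Inl i))" for i
  define bb where "bb j = Lvec (bl (Inr j))" for j
  have sa: "side V a" unfolding side_def
  proof (intro conjI ballI impI)
    show "finite V" "card V = 4" using finV assms(2) by auto
    show "lor (a i) (a i) = 1" if "i \<in> V" for i using nrm[of "Inl i"] that JL by (simp add: a_def)
    show "lor (a i) (a k) \<le> -1" if "i \<in> V" "k \<in> V" "i \<noteq> k" for i k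
      using gd[of "Inl i" "Inl k"] that JL by (simp add: a_def good_def)
  qed
  have sb: "side W bb" unfolding side_def
  proof (intro conjI ballI impI)
    show "finite W" "card W = 4" using finW assms(4) by auto
    show "lor (bb i) (bb i) = 1" if "i \<in> W" for i using nrm[of "Inr i"] that JR by (simp add: bb_def)
    show "lor (bb i) (bb k) \<le> -1" if "i \<in> W" "k \<in> W" "i \<noteq> k" for i k
      using gd[of "Inr i" "Inr k"] that JR by (simp add: bb_def good_def)
  qed
  have cr: "\<forall>i\<in>V. \<forall>j\<in>W. lor (a i) (bb j) = -1"
  proof (intro ballI)
    fix i j assume ij: "i \<in> V" "j \<in> W"
    have m: "Inl i \<in> join_verts V W" "Inr j \<in> join_verts V W" using ij JL JR by simp_all
    have "join_edges V E W F (Inl i) (Inr j)" using ij by simp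
    then have "tangent3 (bl (Inl i)) (bl (Inr j))" using tg[rule_format, OF m] by simp
    then show "lor (a i) (bb j) = -1" using gd[of "Inl i" "Inr j"] ij JL JR by (simp add: a_def bb_def good_def)
  qed
  have cr': "\<forall>j\<in>W. \<forall>i\<in>V. lor (bb j) (a i) = -1" using cr by (simp add: lor_comm)
  have edgeA: "\<forall>i\<in>V. \<forall>k\<in>V. i \<noteq> k \<longrightarrow> (E i k \<longleftrightarrow> lor (a i) (a k) = -1)"
  proof (intro ballI impI)
    fix i k assume ik: "i \<in> V" "k \<in> V" "i \<noteq> k"
    have m: "Inl i \<in> join_verts V W" "Inl k \<in> join_verts V W" using ik JL by simp_all
    have T: "E i k \<longleftrightarrow> tangent3 (bl (Inl i)) (bl (Inl k))" using tg[rule_format, OF m] ik by simp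
    have G: "good (bl (Inl i)) (bl (Inl k))" using gd ik JL by blast
    have ne: "a k \<noteq> - a i"
    proof
      assume h: "a k = - a i"
      obtain j where j: "j \<in> W" using assms(4) by (metis card.empty ex_in_conv zero_neq_numeral)
      have "lor (a k) (bb j) = - lor (a i) (bb j)" using h by (simp add: lor_minus_left)
      moreover have "lor (a k) (bb j) = -1" "lor (a i) (bb j) = -1" using cr ik j by auto
      ultimately show False by simp
    qed
    show "E i k \<longleftrightarrow> lor (a i) (a k) = -1" using T G ne unfolding good_def a_def by blast
  qed
  have edgeB: "\<forall>i\<in>W. \<forall>k\<in>W. i \<noteq> k \<longrightarrow> (F i k \<longleftrightarrow> lor (bb i) (bb k) = -1)"
  proof (intro ballI impI)
    fix i k assume ik: "i \<in> W" "k \<in> W" "i \<noteq> k"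
    have m: "Inr i \<in> join_verts V W" "Inr k \<in> join_verts V W" using ik JR by simp_all
    have T: "F i k \<longleftrightarrow> tangent3 (bl (Inr i)) (bl (Inr k))" using tg[rule_format, OF m] ik by simp
    have G: "good (bl (Inr i)) (bl (Inr k))" using gd ik JR by blast
    have ne: "bb k \<noteq> - bb i"
    proof
      assume h: "bb k = - bb i"
      obtain j where j: "j \<in> V" using assms(2) by (metis card.empty ex_in_conv zero_neq_numeral)
      have "lor (bb k) (a j) = - lor (bb i) (a j)" using h by (simp add: lor_minus_left)
      moreover have "lor (bb k) (a j) = -1" "lor (bb i) (a j) = -1" using cr' ik j by auto
      ultimately show False by simp
    qed
    show "F i k \<longleftrightarrow> lor (bb i) (bb k) = -1" using T G ne unfolding good_def bb_def by blast
  qed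
  show ?thesis
    using side_graph[OF sa sb cr assms(1) edgeA] side_graph[OF sb sa cr' assms(3) edgeB] by blast
qed

end
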